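(* Let $q$ be a prime power, let $\mathbb{K}$ be a field containing $\mathbb{F}_q$, and let $f,g\in\mathbb{K}[X]$. Put $F(X)=f(X^{q-1})$ and $G(X)=\prod_{w\in\mathbb{F}_q^\times} g(wX)$. Suppose that $G$ has no repeated roots in an algebraic closure $\overline{\mathbb{K}}$ of $\mathbb{K}$. If every root of $g$ in $\overline{\mathbb{K}}$ is also a root of $F$, then $G$ divides $F$ in $\mathbb{K}[X]$. *)

theory Defs
  imports "HOL-Computational_Algebra.Polynomial" "HOL-Computational_Algebra.Primes"
          "HOL-Algebra.Algebraic_Closure_Type"
begin

definition is_subfield :: "'k::field set \<Rightarrow> bool" where
  "is_subfield S \<longleftrightarrow> 0 \<in> S \<and> 1 \<in> S \<and>
     (\<forall>x\<in>S. \<forall>y\<in>S. x + y \<in> S \<and> x - y \<in> S \<and> x * y \<in> S) \<and>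
     (\<forall>x\<in>S. inverse x \<in> S)"

end

theory Submission
  imports Defs
begin

lemma ac_map_add: "map_poly to_ac (p + q) = map_poly to_ac p + map_poly to_ac q"
  by (rule poly_eqI) (simp add: coeff_map_poly)

lemma ac_map_mult: "map_poly to_ac (p * q) = map_poly to_ac p * map_poly to_ac q"
  by (rule poly_eqI) (simp add: coeff_map_poly coeff_mult to_ac_sum)

lemma ac_map_prod: "map_poly to_ac (\<Prod>x\<in>A. p x) = (\<Prod>x\<in>A. map_poly to_ac (p x))"
proof (induction A rule: infinite_finite_induct)
  case (infinite A) then show ?case by simp
next
  case empty then show ?case by simp
next
  case (insert x F) then show ?case by (simp add: ac_map_mult)
qed

lemma ac_map_const: "map_poly to_ac [:c:] = [:to_ac c:]"
  by (simp add: map_poly_pCons)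

lemma ac_map_pcompose: "map_poly to_ac (pcompose p q) = pcompose (map_poly to_ac p) (map_poly to_ac q)"
proof (induction p rule: pCons_induct)
  case 0 then show ?case by simp
next
  case (pCons a p)
  then show ?case by (simp add: pcompose_pCons map_poly_pCons ac_map_add ac_map_mult ac_map_const)
qed

lemma ac_map_eq_0: "map_poly to_ac p = 0 \<longleftrightarrow> p = 0"
  by (rule map_poly_eq_0_iff) auto

lemma ac_degree: "degree (map_poly to_ac p) = degree p"
  by (rule degree_map_poly) auto

lemma ac_dvd_descent:
  fixes p q :: "'k::field poly"
  assumes "map_poly to_ac p dvd map_poly to_ac q"
  shows "p dvd q"
proof (cases "p = 0")
  case True
  then show ?thesis using assms by (simp add: ac_map_eq_0)
next
  case False
  have eq: "q = p * (q div p) + q mod p" by simp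
  have "map_poly to_ac q = map_poly to_ac p * map_poly to_ac (q div p) + map_poly to_ac (q mod p)"
    unfolding ac_map_mult[symmetric] ac_map_add[symmetric] by simp
  with assms have d: "map_poly to_ac p dvd map_poly to_ac (q mod p)"
    by (metis dvd_add_right_iff dvd_triv_left)
  show ?thesis
  proof (rule ccontr)
    assume "\<not> p dvd q"
    then have nz: "q mod p \<noteq> 0" by (simp add: mod_eq_0_iff_dvd)
    then have "degree (q mod p) < degree p" using False degree_mod_less' by blast
    moreover have "degree (map_poly to_ac p) \<le> degree (map_poly to_ac (q mod p))"
      using d nz by (intro dvd_imp_degree_le) (auto simp: ac_map_eq_0)
    ultimately show False by (simp add: ac_degree)
  qed
qed

lemma sqfree_dvd:
  fixes p F :: "'a::alg_closed_field poly"
  shows "rsquarefree p \<Longrightarrow> (\<forall>x. poly p x = 0 \<longrightarrow> poly F x = 0) \<Longrightarrow> p dvd F"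
proof (induction "degree p" arbitrary: p F rule: less_induct)
  case less
  show ?case
  proof (cases "degree p = 0")
    case True
    then obtain c where c: "p = [:c:]" using degree_eq_zeroE by blast
    with less.prems have "c \<noteq> 0" by (auto simp: rsquarefree_def)
    then show ?thesis using c by (simp add: const_poly_dvd_iff dvd_field_iff)
  next
    case False
    then obtain a where a: "poly p a = 0" using alg_closed_imp_poly_has_root by blast
    then obtain r where r: "p = [:-a,1:] * r" using poly_eq_0_iff_dvd by (metis dvdE)
    have p0: "p \<noteq> 0" using less.prems by (simp add: rsquarefree_def)
    then have r0: "r \<noteq> 0" using r by auto
    have "order a p = 1" using less.prems a p0 rsquarefree_root_order by blast
    moreover have "order a p = order a [:-a,1:] + order a r" using p0 r order_mult by metis
    moreover have "order a [:-a,1:] = 1" by (simp add: order_power_n_n[where n=1, simplified])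
    ultimately have "order a r = 0" by simp
    then have ra: "poly r a \<noteq> 0" using order_root r0 by blast
    have rsq: "rsquarefree r"
      unfolding rsquarefree_def
    proof (intro conjI allI r0)
      fix b
      have "order b r \<le> order b p" using p0 r dvd_imp_order_le dvd_triv_right by metis
      then show "order b r = 0 \<or> order b r = 1"
        using less.prems(1) unfolding rsquarefree_def by (metis le_Suc_eq le_zero_eq One_nat_def)
    qed
    have "poly F a = 0" using less.prems a by blast
    then obtain F1 where F1: "F = [:-a,1:] * F1" using poly_eq_0_iff_dvd by (metis dvdE)
    have roots: "\<forall>x. poly r x = 0 \<longrightarrow> poly F1 x = 0"
    proof (intro allI impI)
      fix x assume rx: "poly r x = 0"
      then have "x \<noteq> a" using ra by auto
      moreover have "poly F x = 0" using less.prems rx r by auto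
      ultimately show "poly F1 x = 0" using F1 by simp
    qed
    have "degree p = degree [:-a,1:] + degree r" unfolding r by (rule degree_mult_eq) (use r0 in auto)
    then have "degree p = 1 + degree r" by simp
    then have "r dvd F1" using less.hyps[of r F1] rsq roots by simp
    then show ?thesis unfolding r F1 by (rule mult_dvd_mono[OF dvd_refl])
  qed
qed

lemma fq_pow:
  fixes Fq :: "'k::field set"
  assumes sf: "is_subfield Fq" and fin: "finite Fq" and w: "w \<in> Fq" "w \<noteq> 0"
  shows "w ^ (card Fq - 1) = 1"
proof -
  define S where "S = Fq - {0}"
  have cl: "\<And>x y. x \<in> Fq \<Longrightarrow> y \<in> Fq \<Longrightarrow> x * y \<in> Fq"
    and inv: "\<And>x. x \<in> Fq \<Longrightarrow> inverse x \<in> Fq" and z: "0 \<in> Fq"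
    using sf unfolding is_subfield_def by auto
  have finS: "finite S" using fin by (simp add: S_def)
  have "(\<Prod>x\<in>S. w * x) = (\<Prod>x\<in>S. x)"
    by (rule prod.reindex_bij_witness[where i="\<lambda>y. inverse w * y" and j="\<lambda>x. w*x"])
       (use w in \<open>auto simp: S_def cl inv\<close>)
  moreover have "(\<Prod>x\<in>S. w * x) = w ^ card S * (\<Prod>x\<in>S. x)"
    by (simp add: prod.distrib)
  moreover have "(\<Prod>x\<in>S. x) \<noteq> 0" using finS by (simp add: S_def)
  ultimately have "w ^ card S = 1" by simp
  moreover have "card S = card Fq - 1" using fin z by (simp add: S_def)
  ultimately show ?thesis by simp
qed

theorem lemma1:
  fixes q :: nat and Fq :: "'k::field set" and f g :: "'k poly"
  assumes "\<exists>p n. prime p \<and> n > 0 \<and> q = p ^ n"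
    and "is_subfield Fq" and "finite Fq" and "card Fq = q"
    and "rsquarefree (map_poly (to_ac :: 'k \<Rightarrow> 'k alg_closure)
           (\<Prod>w\<in>Fq - {0}. pcompose g [:0, w:]))"
    and "\<forall>x::'k alg_closure. poly (map_poly to_ac g) x = 0 \<longrightarrow>
           poly (map_poly to_ac (pcompose f (monom 1 (q - 1)))) x = 0"
  shows "(\<Prod>w\<in>Fq - {0}. pcompose g [:0, w:]) dvd pcompose f (monom 1 (q - 1))"
proof (rule ac_dvd_descent, rule sqfree_dvd[OF assms(5)], intro allI impI)
  fix x :: "'k alg_closure"
  have lin: "map_poly to_ac [:0, w:] = [:0, to_ac w:]" for w :: 'k
    by (simp add: map_poly_pCons)
  have pF: "poly (map_poly to_ac (pcompose f (monom 1 (q - 1)))) y = poly (map_poly to_ac f) (y ^ (q - 1))" for y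
    by (simp add: ac_map_pcompose map_poly_monom poly_pcompose poly_monom)
  assume "poly (map_poly to_ac (\<Prod>w\<in>Fq - {0}. pcompose g [:0, w:])) x = 0"
  then have "(\<Prod>w\<in>Fq - {0}. poly (map_poly to_ac g) (to_ac w * x)) = 0"
    by (simp add: ac_map_prod poly_prod ac_map_pcompose lin poly_pcompose mult.commute)
  then obtain w where w: "w \<in> Fq" "w \<noteq> 0" and r: "poly (map_poly to_ac g) (to_ac w * x) = 0"
    using assms(3) by (auto simp: prod_zero_iff)
  have "poly (map_poly to_ac (pcompose f (monom 1 (q - 1)))) (to_ac w * x) = 0"
    using assms(6) r by blast
  moreover have "w ^ (q - 1) = 1" using fq_pow[OF assms(2,3) w] assms(4) by simp
  ultimately show "poly (map_poly to_ac (pcompose f (monom 1 (q - 1)))) x = 0"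
    unfolding pF by (simp add: power_mult_distrib flip: to_ac_power)
qed

end
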